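(* Let $\lambda$ be a partition with $d$ distinct part sizes and parameters $(h_1,\dots,h_d)$, $(v_1,\dots,v_d)$. Define $p^{\rm col}_{r,s}(q,t)=p_{r,s}(q^{-1},t^{-1})$ and $\overline{p}^{\rm col}_{r,s}(q,t)=\overline{p}_{r,s}(q^{-1},t^{-1})$. Then for $0\le s\le d$, \[ p^{\rm col}_{r,s}(q,t)=\begin{cases}q^{h_{s+1,d}}\alpha_s&r=0,\\ \tau^{\rm col}_{r,s}\dfrac{\alpha_s\beta_r}{\gamma'_{r,s}}&1\le r\le d,\end{cases}\qquad \overline{p}^{\rm col}_{r,s}(q,t)=\begin{cases}q^{h_{s+1,d}}\overline{\alpha}_s&r=0,\\ \tau^{\rm col}_{r,s}\dfrac{\overline{\alpha}_s\overline{\beta}_r}{\gamma'_{r,s}}&1\le r\le d,\end{cases} \] where (all of $\alpha_s,\overline{\alpha}_s,\beta_r,\overline{\beta}_r,\gamma'_{r,s}$ evaluated at $(q,t)$) $\tau^{\rm col}_{r,s}=q^{-1+h_{r,s}}t^{1+2v_{r+1,s}}$ if $0<r\le s$, and $\tau^{\rm col}_{r,s}=q^{h_{s+1,r-1}}$ if $r>s$.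
   Context: Partitions are Young diagrams in French convention (cells $(x,y)\in\mathbb{Z}_{>0}^2$, $x\le\lambda_y$), $\lambda'$ the conjugate; for $c=(x,y)\in\lambda$, $a_\lambda(c)=\lambda_y-x$, $\ell_\lambda(c)=\lambda'_x-y$; $n(\kappa)=\sum_{c\in\kappa}\ell_\kappa(c)$, $n'(\kappa)=\sum_{c\in\kappa}a_\kappa(c)$, $n(\rho/\kappa)=n(\rho)-n(\kappa)$, $n'(\rho/\kappa)=n'(\rho)-n'(\kappa)$. For $\kappa\subseteq\rho$, $\mathcal{R}_{\rho/\kappa}$ (resp. $\mathcal{C}_{\rho/\kappa}$): cells of $\kappa$ in a row (resp. column) containing a cell of $\rho/\kappa$. $[i,j]=1-q^it^j$, $[i,j]^+=[i+1,j-1]$, $[i,j]^-=[i-1,j+1]$. For $\kappa\lessdot\rho$ (one-cell difference): $\alpha_{\rho/\kappa}=\prod_{c\in\mathcal{R}_{\rho/\kappa}}\frac{[a_\kappa(c),\ell_\kappa(c)+1]}{[a_\rho(c),\ell_\rho(c)+1]}\prod_{c\in\mathcal{C}_{\rho/\kappa}}\frac{[a_\kappa(c)+1,\ell_\kappa(c)]}{[a_\rho(c)+1,\ell_\rho(c)]}$, $\overline{\alpha}_{\rho/\kappa}=\prod_{c\in\mathcal{R}_{\rho/\kappa}}\frac{[a_\kappa(c)+1,\ell_\kappa(c)]}{[a_\rho(c)+1,\ell_\rho(c)]}\prod_{c\in\mathcal{C}_{\rho/\kappa}}\frac{[a_\kappa(c),\ell_\kappa(c)+1]}{[a_\rho(c),\ell_\rho(c)+1]}$,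 $\beta=1/\alpha$, $\overline{\beta}=1/\overline{\alpha}$. For $\mu\lessdot\lambda\lessdot\nu$, with $A=n'(\lambda/\mu)-n'(\nu/\lambda)$, $B=n(\nu/\lambda)-n(\lambda/\mu)$: $\gamma_{\nu/\lambda/\mu}=\frac{(1-q^At^B)(1-q^{A+1}t^{B-1})}{(1-q)(1-t)}$. Probabilities: $\mathcal{P}_\lambda(\lambda\rightarrow\nu)=t^{n(\nu/\lambda)}\alpha_{\nu/\lambda}$, $\overline{\mathcal{P}}_\lambda(\lambda\leftarrow\nu)=t^{n(\nu/\lambda)}\overline{\alpha}_{\nu/\lambda}$, for $\mu\lessdot\lambda$: $\mathcal{P}_\lambda(\mu\rightarrow\nu)=t^{B-1}\alpha_{\nu/\lambda}\beta_{\lambda/\mu}/\gamma_{\nu/\lambda/\mu}$, $\overline{\mathcal{P}}_\lambda(\mu\leftarrow\nu)=t^{B-1}\overline{\alpha}_{\nu/\lambda}\overline{\beta}_{\lambda/\mu}/\gamma_{\nu/\lambda/\mu}$. Parameters: if $\lambda$ has distinct part sizes $u_1>\dots>u_d>0$, $v_i$ is the multiplicity of $u_i$ and $h_i=u_i-u_{i+1}$ ($u_{d+1}=0$); $h_{i,j}=h_i+\dots+h_j$, $v_{i,j}=v_i+\dots+v_j$ for $i\le j$, and $0$ for $i>j$. For $0\le s\le d$, $\lambda^{(+s)}$ adds a cell in row $v_{1,s}+1$; $\lambda^{(-0)}=\lambda$, and for $1\le r\le d$, $\lambda^{(-r)}$ removes a cell from row $v_{1,r}$. $\alpha_s=\alpha_{\lambda^{(+s)}/\lambda}$,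 $\overline{\alpha}_s=\overline{\alpha}_{\lambda^{(+s)}/\lambda}$, $\beta_r=\beta_{\lambda/\lambda^{(-r)}}$, $\overline{\beta}_r=\overline{\beta}_{\lambda/\lambda^{(-r)}}$, $p_{r,s}=\mathcal{P}_\lambda(\lambda^{(-r)}\rightarrow\lambda^{(+s)})$, $\overline{p}_{r,s}=\overline{\mathcal{P}}_\lambda(\lambda^{(-r)}\leftarrow\lambda^{(+s)})$, and $\gamma'_{r,s}=\frac{[h_{r,s},v_{r+1,s}][h_{r,s},v_{r+1,s}]^-}{[0,1][1,0]}$ if $0<r\le s$, $\gamma'_{r,s}=\frac{[h_{s+1,r-1},v_{s+1,r}][h_{s+1,r-1},v_{s+1,r}]^+}{[0,1][1,0]}$ if $r>s$. *)

theory Defs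
  imports Complex_Main
begin

text \<open>Partitions are represented as weakly decreasing lists of positive naturals
  (lambda_1 >= lambda_2 >= ... > 0).  Cells are pairs (x,y) of positive naturals with
  x <= lambda_y (French convention).\<close>

definition is_partition :: "nat list \<Rightarrow> bool" where
  "is_partition lam \<longleftrightarrow> sorted (rev lam) \<and> 0 \<notin> set lam"

definition prow :: "nat list \<Rightarrow> nat \<Rightarrow> nat" where
  "prow lam y = (if 1 \<le> y \<and> y \<le> length lam then lam ! (y - 1) else 0)"

definition pconj :: "nat list \<Rightarrow> nat \<Rightarrow> nat" where
  "pconj lam x = card {y \<in> {1..length lam}. x \<le> prow lam y}"

definition cells :: "nat list \<Rightarrow> (nat \<times> nat) set" where
  "cells lam = {(x, y). 1 \<le> y \<and> 1 \<le> x \<and> x \<le> prow lam y}"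

definition arm :: "nat list \<Rightarrow> nat \<times> nat \<Rightarrow> int" where
  "arm lam c = int (prow lam (snd c)) - int (fst c)"

definition leg :: "nat list \<Rightarrow> nat \<times> nat \<Rightarrow> int" where
  "leg lam c = int (pconj lam (fst c)) - int (snd c)"

definition nfun :: "nat list \<Rightarrow> int" where
  "nfun kap = (\<Sum>c\<in>cells kap. leg kap c)"

definition nfun' :: "nat list \<Rightarrow> int" where
  "nfun' kap = (\<Sum>c\<in>cells kap. arm kap c)"

definition Rset :: "nat list \<Rightarrow> nat list \<Rightarrow> (nat \<times> nat) set" where
  "Rset rho kap = {c \<in> cells kap. \<exists>e \<in> cells rho - cells kap. snd e = snd c}"

definition Cset :: "nat list \<Rightarrow> nat list \<Rightarrow> (nat \<times> nat) set" where
  "Cset rho kap = {c \<in> cells kap. \<exists>e \<in> cells rho - cells kap. fst e = fst c}"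

definition br :: "real \<Rightarrow> real \<Rightarrow> int \<Rightarrow> int \<Rightarrow> real" where
  "br q t i j = 1 - q powi i * t powi j"

definition alpha :: "real \<Rightarrow> real \<Rightarrow> nat list \<Rightarrow> nat list \<Rightarrow> real" where
  "alpha q t rho kap =
     (\<Prod>c\<in>Rset rho kap. br q t (arm kap c) (leg kap c + 1) / br q t (arm rho c) (leg rho c + 1)) *
     (\<Prod>c\<in>Cset rho kap. br q t (arm kap c + 1) (leg kap c) / br q t (arm rho c + 1) (leg rho c))"

definition alphabar :: "real \<Rightarrow> real \<Rightarrow> nat list \<Rightarrow> nat list \<Rightarrow> real" where
  "alphabar q t rho kap =
     (\<Prod>c\<in>Rset rho kap. br q t (arm kap c + 1) (leg kap c) / br q t (arm rho c + 1) (leg rho c)) *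
     (\<Prod>c\<in>Cset rho kap. br q t (arm kap c) (leg kap c + 1) / br q t (arm rho c) (leg rho c + 1))"

definition beta :: "real \<Rightarrow> real \<Rightarrow> nat list \<Rightarrow> nat list \<Rightarrow> real" where
  "beta q t rho kap = 1 / alpha q t rho kap"

definition betabar :: "real \<Rightarrow> real \<Rightarrow> nat list \<Rightarrow> nat list \<Rightarrow> real" where
  "betabar q t rho kap = 1 / alphabar q t rho kap"

definition gA :: "nat list \<Rightarrow> nat list \<Rightarrow> nat list \<Rightarrow> int" where
  "gA nu lam mu = (nfun' lam - nfun' mu) - (nfun' nu - nfun' lam)"

definition gB :: "nat list \<Rightarrow> nat list \<Rightarrow> nat list \<Rightarrow> int" where
  "gB nu lam mu = (nfun nu - nfun lam) - (nfun lam - nfun mu)"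

definition gamma :: "real \<Rightarrow> real \<Rightarrow> nat list \<Rightarrow> nat list \<Rightarrow> nat list \<Rightarrow> real" where
  "gamma q t nu lam mu =
     (1 - q powi (gA nu lam mu) * t powi (gB nu lam mu)) *
     (1 - q powi (gA nu lam mu + 1) * t powi (gB nu lam mu - 1)) / ((1 - q) * (1 - t))"

definition P0 :: "real \<Rightarrow> real \<Rightarrow> nat list \<Rightarrow> nat list \<Rightarrow> real" where
  "P0 q t lam nu = t powi (nfun nu - nfun lam) * alpha q t nu lam"

definition P0bar :: "real \<Rightarrow> real \<Rightarrow> nat list \<Rightarrow> nat list \<Rightarrow> real" where
  "P0bar q t lam nu = t powi (nfun nu - nfun lam) * alphabar q t nu lam"

definition P1 :: "real \<Rightarrow> real \<Rightarrow> nat list \<Rightarrow> nat list \<Rightarrow> nat list \<Rightarrow> real" where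
  "P1 q t lam mu nu = t powi (gB nu lam mu - 1) * alpha q t nu lam * beta q t lam mu / gamma q t nu lam mu"

definition P1bar :: "real \<Rightarrow> real \<Rightarrow> nat list \<Rightarrow> nat list \<Rightarrow> nat list \<Rightarrow> real" where
  "P1bar q t lam mu nu = t powi (gB nu lam mu - 1) * alphabar q t nu lam * betabar q t lam mu / gamma q t nu lam mu"

definition dpar :: "nat list \<Rightarrow> nat" where
  "dpar lam = length (remdups lam)"

text \<open>u_i (1-based), with u_{d+1} = 0.\<close>
definition upar :: "nat list \<Rightarrow> nat \<Rightarrow> nat" where
  "upar lam i = (if 1 \<le> i \<and> i \<le> dpar lam then remdups lam ! (i - 1) else 0)"

definition vpar :: "nat list \<Rightarrow> nat \<Rightarrow> nat" where
  "vpar lam i = length (filter (\<lambda>x. x = upar lam i) lam)"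

definition hpar :: "nat list \<Rightarrow> nat \<Rightarrow> nat" where
  "hpar lam i = upar lam i - upar lam (i + 1)"

text \<open>h_{i,j}, v_{i,j}; these are 0 when i > j.\<close>
definition hsum :: "nat list \<Rightarrow> nat \<Rightarrow> nat \<Rightarrow> nat" where
  "hsum lam i j = (\<Sum>k\<in>{i..j}. hpar lam k)"

definition vsum :: "nat list \<Rightarrow> nat \<Rightarrow> nat \<Rightarrow> nat" where
  "vsum lam i j = (\<Sum>k\<in>{i..j}. vpar lam k)"

definition add_cell :: "nat list \<Rightarrow> nat \<Rightarrow> nat list" where
  "add_cell lam i = (if i = Suc (length lam) then lam @ [1] else lam[i - 1 := Suc (lam ! (i - 1))])"

definition rem_cell :: "nat list \<Rightarrow> nat \<Rightarrow> nat list" where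
  "rem_cell lam i = filter (\<lambda>x. 0 < x) (lam[i - 1 := lam ! (i - 1) - 1])"

definition lam_plus :: "nat list \<Rightarrow> nat \<Rightarrow> nat list" where
  "lam_plus lam s = add_cell lam (vsum lam 1 s + 1)"

definition lam_minus :: "nat list \<Rightarrow> nat \<Rightarrow> nat list" where
  "lam_minus lam r = (if r = 0 then lam else rem_cell lam (vsum lam 1 r))"

definition ppar :: "real \<Rightarrow> real \<Rightarrow> nat list \<Rightarrow> nat \<Rightarrow> nat \<Rightarrow> real" where
  "ppar q t lam r s = (if r = 0 then P0 q t lam (lam_plus lam s)
                       else P1 q t lam (lam_minus lam r) (lam_plus lam s))"

definition pbarpar :: "real \<Rightarrow> real \<Rightarrow> nat list \<Rightarrow> nat \<Rightarrow> nat \<Rightarrow> real" where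
  "pbarpar q t lam r s = (if r = 0 then P0bar q t lam (lam_plus lam s)
                       else P1bar q t lam (lam_minus lam r) (lam_plus lam s))"

definition pcol :: "real \<Rightarrow> real \<Rightarrow> nat list \<Rightarrow> nat \<Rightarrow> nat \<Rightarrow> real" where
  "pcol q t lam r s = ppar (1 / q) (1 / t) lam r s"

definition pbarcol :: "real \<Rightarrow> real \<Rightarrow> nat list \<Rightarrow> nat \<Rightarrow> nat \<Rightarrow> real" where
  "pbarcol q t lam r s = pbarpar (1 / q) (1 / t) lam r s"

definition gammap :: "real \<Rightarrow> real \<Rightarrow> nat list \<Rightarrow> nat \<Rightarrow> nat \<Rightarrow> real" where
  "gammap q t lam r s =
    (if 0 < r \<and> r \<le> s then
       br q t (hsum lam r s) (vsum lam (r + 1) s) * br q t (int (hsum lam r s) - 1) (int (vsum lam (r + 1) s) + 1)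
         / (br q t 0 1 * br q t 1 0)
     else
       br q t (hsum lam (s + 1) (r - 1)) (vsum lam (s + 1) r) *
       br q t (int (hsum lam (s + 1) (r - 1)) + 1) (int (vsum lam (s + 1) r) - 1)
         / (br q t 0 1 * br q t 1 0))"

definition taucol :: "real \<Rightarrow> real \<Rightarrow> nat list \<Rightarrow> nat \<Rightarrow> nat \<Rightarrow> real" where
  "taucol q t lam r s =
    (if 0 < r \<and> r \<le> s then q powi (-1 + int (hsum lam r s)) * t powi (1 + 2 * int (vsum lam (r + 1) s))
     else q powi (int (hsum lam (s + 1) (r - 1))))"

text \<open>Genericity of (q,t): identities of rational functions in q,t are stated at all
  points where no monomial q^i t^j with (i,j) \<noteq> (0,0) equals 1 (a Zariski-dense set).\<close>
definition generic_qt :: "real \<Rightarrow> real \<Rightarrow> bool" where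
  "generic_qt q t \<longleftrightarrow> q \<noteq> 0 \<and> t \<noteq> 0 \<and> (\<forall>i j :: int. (i, j) \<noteq> (0, 0) \<longrightarrow> q powi i * t powi j \<noteq> 1)"

end

theory Submission
  imports Defs
begin

lemma br_inv:
  assumes "q \<noteq> 0" "t \<noteq> 0"
  shows "br (1/q) (1/t) i j = - (q powi (-i) * t powi (-j)) * br q t i j"
  using assms by (simp add: br_def power_int_divide_distrib power_int_minus_divide field_simps)

lemma ratio_inv:
  assumes "q \<noteq> 0" "t \<noteq> 0"
  shows "br (1/q) (1/t) a b / br (1/q) (1/t) c d
     = (q powi (c - a) * t powi (d - b)) * (br q t a b / br q t c d)"
proof -
  have "br (1/q) (1/t) a b / br (1/q) (1/t) c d
     = ((q powi (-a) * t powi (-b)) / (q powi (-c) * t powi (-d))) * (br q t a b / br q t c d)"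
    using assms by (simp add: br_inv)
  also have "(q powi (-a) * t powi (-b)) / (q powi (-c) * t powi (-d)) = q powi (c - a) * t powi (d - b)"
    using assms by (simp add: power_int_diff power_int_minus field_simps)
  finally show ?thesis .
qed

lemma prow_zero: "y < 1 \<or> length lam < y \<Longrightarrow> prow lam y = 0"
  by (auto simp: prow_def)

lemma pconj_alt:
  assumes "1 \<le> x"
  shows "pconj lam x = card {y. 1 \<le> y \<and> x \<le> prow lam y}"
proof -
  have "{y \<in> {1..length lam}. x \<le> prow lam y} = {y. 1 \<le> y \<and> x \<le> prow lam y}"
    using assms by (auto simp: prow_def split: if_splits)
  then show ?thesis by (simp add: pconj_def)
qed

lemma finite_rows: "1 \<le> x \<Longrightarrow> finite {y. 1 \<le> y \<and> x \<le> prow lam y}"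
  by (rule finite_subset[of _ "{1..length lam}"]) (auto simp: prow_def split: if_splits)

lemma finite_cells: "finite (cells lam)"
proof -
  have "prow lam y \<le> Max (insert 0 (set lam))" for y
    by (auto simp: prow_def intro!: Max_ge)
  then have "cells lam \<subseteq> {0..Max (insert 0 (set lam))} \<times> {0..length lam}"
  proof (clarsimp simp: cells_def)
    fix a b assume h: "Suc 0 \<le> b" "Suc 0 \<le> a" "a \<le> prow lam b"
    then show "a \<le> Max (insert 0 (set lam)) \<and> b \<le> length lam"
      using \<open>\<And>y. prow lam y \<le> Max (insert 0 (set lam))\<close>[of b]
      by (auto simp: prow_def split: if_splits)
  qed
  then show ?thesis by (rule finite_subset) auto
qed

locale onecell =
  fixes rho kap :: "nat list" and y :: nat
  assumes y1: "1 \<le> y"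
    and pr: "prow rho = (prow kap)(y := prow kap y + 1)"
    and pc: "pconj kap (prow kap y + 1) = y - 1"
begin

abbreviation "x \<equiv> prow kap y + 1"

lemma cells_rho: "cells rho = insert (x, y) (cells kap)"
  using y1 by (auto simp: cells_def pr)

lemma notin: "(x, y) \<notin> cells kap"
  by (auto simp: cells_def)

lemma arm_rho: "c \<in> cells kap \<Longrightarrow> arm rho c = arm kap c + (if snd c = y then 1 else 0)"
  by (auto simp: arm_def pr)

lemma leg_rho: "c \<in> cells kap \<Longrightarrow> leg rho c = leg kap c + (if fst c = x then 1 else 0)"
proof -
  assume c: "c \<in> cells kap"
  then have f1: "1 \<le> fst c" by (auto simp: cells_def)
  show ?thesis
  proof (cases "fst c = x")
    case True
    have "{y'. 1 \<le> y' \<and> fst c \<le> prow rho y'} = insert y {y'. 1 \<le> y' \<and> fst c \<le> prow kap y'}"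
      using True y1 by (auto simp: pr)
    moreover have "y \<notin> {y'. 1 \<le> y' \<and> fst c \<le> prow kap y'}" using True by auto
    ultimately have "pconj rho (fst c) = pconj kap (fst c) + 1"
      using f1 finite_rows[OF f1, of kap] by (simp add: pconj_alt)
    then show ?thesis using True by (simp add: leg_def)
  next
    case False
    have "{y'. 1 \<le> y' \<and> fst c \<le> prow rho y'} = {y'. 1 \<le> y' \<and> fst c \<le> prow kap y'}"
      using False by (auto simp: pr)
    then have "pconj rho (fst c) = pconj kap (fst c)"
      using f1 by (simp add: pconj_alt)
    then show ?thesis using False by (simp add: leg_def)
  qed
qed

lemma new_in: "(x, y) \<in> cells rho - cells kap"
  using notin cells_rho by auto

lemma Rset_eq: "Rset rho kap = {c \<in> cells kap. snd c = y}"
  unfolding Rset_def using new_in by (auto simp: cells_rho intro!: bexI[where x="(prow kap y + 1, y)"])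

lemma Cset_eq: "Cset rho kap = {c \<in> cells kap. fst c = x}"
  unfolding Cset_def using new_in by (auto simp: cells_rho intro!: bexI[where x="(prow kap y + 1, y)"])

lemma card_R: "card (Rset rho kap) = prow kap y"
proof -
  have "Rset rho kap = (\<lambda>x'. (x', y)) ` {1..prow kap y}"
    using y1 by (auto simp: Rset_eq cells_def)
  moreover have "inj_on (\<lambda>x'. (x', y)) {1..prow kap y}" by (auto simp: inj_on_def)
  ultimately show ?thesis by (simp add: card_image)
qed

lemma card_C: "card (Cset rho kap) = y - 1"
proof -
  have "Cset rho kap = (\<lambda>y'. (x, y')) ` {y'. 1 \<le> y' \<and> x \<le> prow kap y'}"
    by (auto simp: Cset_eq cells_def)
  moreover have "inj_on (\<lambda>y'. (x, y')) {y'. 1 \<le> y' \<and> x \<le> prow kap y'}" by (auto simp: inj_on_def)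
  ultimately show ?thesis using pc by (simp add: card_image pconj_alt)
qed

lemma R_props: "c \<in> Rset rho kap \<Longrightarrow> c \<in> cells kap \<and> snd c = y \<and> fst c \<noteq> x"
  by (auto simp: Rset_eq cells_def)

lemma C_props: "c \<in> Cset rho kap \<Longrightarrow> c \<in> cells kap \<and> fst c = x \<and> snd c \<noteq> y"
  by (auto simp: Cset_eq cells_def)

lemma alpha_inv:
  assumes "q \<noteq> 0" "t \<noteq> 0"
  shows "alpha (1/q) (1/t) rho kap = q ^ prow kap y * t ^ (y - 1) * alpha q t rho kap"
proof -
  have R: "(\<Prod>c\<in>Rset rho kap. br (1/q) (1/t) (arm kap c) (leg kap c + 1) / br (1/q) (1/t) (arm rho c) (leg rho c + 1))
      = (\<Prod>c\<in>Rset rho kap. q * (br q t (arm kap c) (leg kap c + 1) / br q t (arm rho c) (leg rho c + 1)))"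
  proof (rule prod.cong[OF refl])
    fix c assume "c \<in> Rset rho kap"
    then have "arm rho c = arm kap c + 1" "leg rho c = leg kap c"
      using R_props arm_rho leg_rho by auto
    then show "br (1/q) (1/t) (arm kap c) (leg kap c + 1) / br (1/q) (1/t) (arm rho c) (leg rho c + 1)
       = q * (br q t (arm kap c) (leg kap c + 1) / br q t (arm rho c) (leg rho c + 1))" using ratio_inv[OF assms] by simp
  qed
  have C: "(\<Prod>c\<in>Cset rho kap. br (1/q) (1/t) (arm kap c + 1) (leg kap c) / br (1/q) (1/t) (arm rho c + 1) (leg rho c))
      = (\<Prod>c\<in>Cset rho kap. t * (br q t (arm kap c + 1) (leg kap c) / br q t (arm rho c + 1) (leg rho c)))"
  proof (rule prod.cong[OF refl])
    fix c assume "c \<in> Cset rho kap"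
    then have "arm rho c = arm kap c" "leg rho c = leg kap c + 1"
      using C_props arm_rho leg_rho by auto
    then show "br (1/q) (1/t) (arm kap c + 1) (leg kap c) / br (1/q) (1/t) (arm rho c + 1) (leg rho c)
      = t * (br q t (arm kap c + 1) (leg kap c) / br q t (arm rho c + 1) (leg rho c))" using ratio_inv[OF assms] by simp
  qed
  show ?thesis unfolding alpha_def R C prod.distrib card_R card_C
    by (simp add: card_R card_C)
qed

lemma alphabar_inv:
  assumes "q \<noteq> 0" "t \<noteq> 0"
  shows "alphabar (1/q) (1/t) rho kap = q ^ prow kap y * t ^ (y - 1) * alphabar q t rho kap"
proof -
  have R: "(\<Prod>c\<in>Rset rho kap. br (1/q) (1/t) (arm kap c + 1) (leg kap c) / br (1/q) (1/t) (arm rho c + 1) (leg rho c))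
      = (\<Prod>c\<in>Rset rho kap. q * (br q t (arm kap c + 1) (leg kap c) / br q t (arm rho c + 1) (leg rho c)))"
  proof (rule prod.cong[OF refl])
    fix c assume "c \<in> Rset rho kap"
    then have "arm rho c = arm kap c + 1" "leg rho c = leg kap c"
      using R_props arm_rho leg_rho by auto
    then show "br (1/q) (1/t) (arm kap c + 1) (leg kap c) / br (1/q) (1/t) (arm rho c + 1) (leg rho c)
      = q * (br q t (arm kap c + 1) (leg kap c) / br q t (arm rho c + 1) (leg rho c))" using ratio_inv[OF assms] by simp
  qed
  have C: "(\<Prod>c\<in>Cset rho kap. br (1/q) (1/t) (arm kap c) (leg kap c + 1) / br (1/q) (1/t) (arm rho c) (leg rho c + 1))
      = (\<Prod>c\<in>Cset rho kap. t * (br q t (arm kap c) (leg kap c + 1) / br q t (arm rho c) (leg rho c + 1)))"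
  proof (rule prod.cong[OF refl])
    fix c assume "c \<in> Cset rho kap"
    then have "arm rho c = arm kap c" "leg rho c = leg kap c + 1"
      using C_props arm_rho leg_rho by auto
    then show "br (1/q) (1/t) (arm kap c) (leg kap c + 1) / br (1/q) (1/t) (arm rho c) (leg rho c + 1)
      = t * (br q t (arm kap c) (leg kap c + 1) / br q t (arm rho c) (leg rho c + 1))" using ratio_inv[OF assms] by simp
  qed
  show ?thesis unfolding alphabar_def R C prod.distrib
    by (simp add: card_R card_C)
qed

lemma nfun_diff: "nfun rho - nfun kap = int (y - 1)"
proof -
  have e: "{y'. 1 \<le> y' \<and> x \<le> prow rho y'} = insert y {y'. 1 \<le> y' \<and> x \<le> prow kap y'}"
    using y1 by (auto simp: pr)
  have "y \<notin> {y'. 1 \<le> y' \<and> x \<le> prow kap y'}" by auto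
  then have "pconj rho x = pconj kap x + 1"
    using e finite_rows[of x kap] by (simp add: pconj_alt)
  then have lx: "leg rho (x, y) = 0" using pc y1 by (simp add: leg_def)
  have "nfun rho = (\<Sum>c\<in>cells kap. leg rho c)"
    unfolding nfun_def cells_rho using finite_cells notin lx by simp
  also have "\<dots> = (\<Sum>c\<in>cells kap. leg kap c + (if fst c = x then 1 else 0))"
    by (rule sum.cong) (auto simp: leg_rho)
  also have "\<dots> = nfun kap + card {c \<in> cells kap. fst c = x}"
    by (simp add: sum.distrib nfun_def sum.If_cases finite_cells Int_def)
  finally show ?thesis using card_C by (simp add: Cset_eq)
qed

lemma nfun'_diff: "nfun' rho - nfun' kap = int (prow kap y)"
proof -
  have ax: "arm rho (x, y) = 0" using pr by (simp add: arm_def)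
  have "nfun' rho = (\<Sum>c\<in>cells kap. arm rho c)"
    unfolding nfun'_def cells_rho using finite_cells notin ax by simp
  also have "\<dots> = (\<Sum>c\<in>cells kap. arm kap c + (if snd c = y then 1 else 0))"
    by (rule sum.cong) (auto simp: arm_rho)
  also have "\<dots> = nfun' kap + card {c \<in> cells kap. snd c = y}"
    by (simp add: sum.distrib nfun'_def sum.If_cases finite_cells Int_def)
  finally show ?thesis using card_R by (simp add: Rset_eq)
qed

end

lemma sorted_wrt_remdups': "sorted_wrt P xs \<Longrightarrow> sorted_wrt P (remdups xs)"
  by (induction xs) auto

lemma init_seg:
  fixes S :: "nat set"
  assumes "S \<subseteq> {1..n}" "\<And>y y'. y \<in> S \<Longrightarrow> 1 \<le> y' \<Longrightarrow> y' \<le> y \<Longrightarrow> y' \<in> S"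
  shows "S = {1..card S}"
  using assms
proof (induction n arbitrary: S)
  case 0 then show ?case by auto
next
  case (Suc n)
  show ?case
  proof (cases "Suc n \<in> S")
    case True
    then have "S = {1..Suc n}" using Suc.prems by fastforce
    then show ?thesis by simp
  next
    case False
    then have "S \<subseteq> {1..n}" using Suc.prems(1) by (auto simp: le_Suc_eq)
    then show ?thesis using Suc.IH Suc.prems(2) by blast
  qed
qed

lemma sd_strict: "sorted_wrt (\<ge>) (xs::nat list) \<Longrightarrow> distinct xs \<Longrightarrow> sorted_wrt (>) xs"
  by (induction xs) (auto simp: order.order_iff_strict)


lemma add_cell_prow:
  assumes "1 \<le> y" "y \<le> Suc (length lam)"
  shows "prow (add_cell lam y) = (prow lam)(y := prow lam y + 1)"
proof (cases "y = Suc (length lam)")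
  case True
  then show ?thesis
    by (auto simp: fun_eq_iff add_cell_def prow_def nth_append)
next
  case False
  then have "y \<le> length lam" using assms by auto
  then show ?thesis using assms False
    by (auto simp: fun_eq_iff add_cell_def prow_def nth_list_update)
qed

lemma rem_cell_prow:
  assumes "1 \<le> y" "y \<le> length lam" "\<And>v. v \<in> set lam \<Longrightarrow> 0 < v"
    and "lam ! (y - 1) = 1 \<Longrightarrow> y = length lam"
  shows "prow (rem_cell lam y) = (prow lam)(y := prow lam y - 1)"
proof (cases "lam ! (y - 1) = 1")
  case False
  have "lam ! (y - 1) \<in> set lam" using assms(1,2) by auto
  then have pos: "0 < lam ! (y - 1) - 1" using False assms(3) by fastforce
  have "\<forall>v\<in>set (lam[y - 1 := lam ! (y - 1) - 1]). 0 < v"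
    using set_update_subset_insert[of lam "y - 1" "lam ! (y - 1) - 1"] pos assms(3) by auto
  then have "rem_cell lam y = lam[y - 1 := lam ! (y - 1) - 1]"
    by (simp add: rem_cell_def)
  then show ?thesis using assms(1,2)
    by (auto simp: fun_eq_iff prow_def nth_list_update)
next
  case True
  then have yl: "y = length lam" by (rule assms(4))
  then have ne: "lam \<noteq> []" using assms(1) by auto
  obtain xs a where xa: "lam = xs @ [a]" using ne by (metis rev_exhaust)
  have "lam[y - 1 := lam ! (y - 1) - 1] = butlast lam @ [0]"
    using True yl unfolding xa by (simp add: nth_append)
  moreover have "\<forall>v\<in>set (butlast lam). 0 < v" using assms(3) by (auto dest: in_set_butlastD)
  ultimately have "rem_cell lam y = butlast lam"
    by (simp add: rem_cell_def)
  then show ?thesis using yl True ne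
    by (auto simp: fun_eq_iff prow_def nth_butlast)
qed

context
  fixes lam :: "nat list"
  assumes part: "is_partition lam"
begin

lemma lam_dec: "sorted_wrt (\<ge>) lam"
  using part by (simp add: is_partition_def sorted_wrt_rev)

lemma lam_pos: "v \<in> set lam \<Longrightarrow> 0 < v"
  using part unfolding is_partition_def by (metis gr0I)

lemma R_dec: "sorted_wrt (>) (remdups lam)"
proof -
  have "sorted_wrt (\<ge>) (remdups lam)" using lam_dec sorted_wrt_remdups' by blast
  moreover have "distinct (remdups lam)" by simp
  ultimately show ?thesis by (rule sd_strict)
qed

lemma u_in: "1 \<le> k \<Longrightarrow> k \<le> dpar lam \<Longrightarrow> upar lam k \<in> set lam"
  using nth_mem[of "k - 1" "remdups lam"] by (auto simp: upar_def dpar_def)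

lemma u_pos: "1 \<le> k \<Longrightarrow> k \<le> dpar lam \<Longrightarrow> 0 < upar lam k"
  using u_in lam_pos by blast

lemma u_surj: "v \<in> set lam \<Longrightarrow> \<exists>k. 1 \<le> k \<and> k \<le> dpar lam \<and> v = upar lam k"
proof -
  assume "v \<in> set lam"
  then have "v \<in> set (remdups lam)" by simp
  then obtain i where "i < length (remdups lam)" "remdups lam ! i = v" by (meson in_set_conv_nth)
  then show ?thesis by (intro exI[of _ "Suc i"]) (auto simp: upar_def dpar_def)
qed

lemma u_strict: "1 \<le> i \<Longrightarrow> i < j \<Longrightarrow> j \<le> dpar lam \<Longrightarrow> upar lam j < upar lam i"
  using R_dec by (auto simp: upar_def dpar_def sorted_wrt_iff_nth_less)

lemma u_suc_le: "1 \<le> k \<Longrightarrow> upar lam (Suc k) \<le> upar lam k"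
proof -
  assume k: "1 \<le> k"
  show ?thesis
  proof (cases "Suc k \<le> dpar lam")
    case True then show ?thesis using u_strict[of k "Suc k"] k by simp
  next
    case False then show ?thesis by (simp add: upar_def)
  qed
qed

lemma u_anti: "1 \<le> i \<Longrightarrow> i \<le> j \<Longrightarrow> upar lam j \<le> upar lam i"
proof (induction j)
  case 0 then show ?case by simp
next
  case (Suc n) then show ?case using u_suc_le[of n] by (auto simp: le_Suc_eq)
qed

lemma u_gap: "1 \<le> s \<Longrightarrow> s \<le> dpar lam \<Longrightarrow> upar lam (Suc s) < upar lam s"
  using u_strict[of s "Suc s"] u_pos[of s] by (cases "Suc s \<le> dpar lam") (auto simp: upar_def)

lemma prow_in: "1 \<le> y \<Longrightarrow> 0 < prow lam y \<Longrightarrow> prow lam y \<in> set lam \<and> y \<le> length lam"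
  by (auto simp: prow_def split: if_splits)

lemma prow_dec: "1 \<le> y \<Longrightarrow> y \<le> y' \<Longrightarrow> prow lam y' \<le> prow lam y"
proof -
  assume a: "1 \<le> y" "y \<le> y'"
  show ?thesis
  proof (cases "y' \<le> length lam \<and> y < y'")
    case True
    then have "lam ! (y' - 1) \<le> lam ! (y - 1)"
      using lam_dec a by (auto simp: sorted_wrt_iff_nth_less)
    then show ?thesis using True a by (simp add: prow_def)
  next
    case False
    then show ?thesis using a by (auto simp: prow_def)
  qed
qed

lemma val_le: "1 \<le> y \<Longrightarrow> prow lam y \<le> upar lam 1"
proof -
  assume y: "1 \<le> y"
  show ?thesis
  proof (cases "prow lam y = 0")
    case False
    then obtain k where "1 \<le> k" "k \<le> dpar lam" "prow lam y = upar lam k"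
      using prow_in[OF y] u_surj by blast
    then show ?thesis using u_anti[of 1 k] by simp
  qed simp
qed

lemma val_below:
  assumes "1 \<le> y" "1 \<le> s" "s \<le> dpar lam" "prow lam y < upar lam s"
  shows "prow lam y \<le> upar lam (Suc s)"
proof (cases "prow lam y = 0")
  case False
  then obtain k where k: "1 \<le> k" "k \<le> dpar lam" "prow lam y = upar lam k"
    using prow_in[OF assms(1)] u_surj by blast
  have "\<not> k \<le> s" using u_anti[of k s] k assms by auto
  then show ?thesis using u_anti[of "Suc s" k] k by simp
qed simp

lemma vpar_pos: "1 \<le> k \<Longrightarrow> k \<le> dpar lam \<Longrightarrow> 0 < vpar lam k"
proof -
  assume "1 \<le> k" "k \<le> dpar lam"
  then have "upar lam k \<in> set lam" by (rule u_in)
  then have "filter (\<lambda>x. x = upar lam k) lam \<noteq> []" by (auto simp: filter_empty_conv)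
  then show ?thesis by (simp add: vpar_def)
qed

lemma vpar_card: "vpar lam k = card {y. 1 \<le> y \<and> y \<le> length lam \<and> prow lam y = upar lam k}"
proof -
  have "vpar lam k = card {i. i < length lam \<and> lam ! i = upar lam k}"
    by (simp add: vpar_def length_filter_conv_card)
  also have "\<dots> = card (Suc ` {i. i < length lam \<and> lam ! i = upar lam k})"
    by (simp add: card_image)
  also have "Suc ` {i. i < length lam \<and> lam ! i = upar lam k} = {y. 1 \<le> y \<and> y \<le> length lam \<and> prow lam y = upar lam k}"
  proof (rule set_eqI, rule iffI)
    fix y assume "y \<in> Suc ` {i. i < length lam \<and> lam ! i = upar lam k}"
    then show "y \<in> {y. 1 \<le> y \<and> y \<le> length lam \<and> prow lam y = upar lam k}"
      by (auto simp: prow_def)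
  next
    fix y assume y: "y \<in> {y. 1 \<le> y \<and> y \<le> length lam \<and> prow lam y = upar lam k}"
    then have "y - 1 \<in> {i. i < length lam \<and> lam ! i = upar lam k}" by (auto simp: prow_def)
    moreover have "y = Suc (y - 1)" using y by auto
    ultimately show "y \<in> Suc ` {i. i < length lam \<and> lam ! i = upar lam k}" by blast
  qed
  finally show ?thesis .
qed

definition S :: "nat \<Rightarrow> nat set" where
  "S s = {y. 1 \<le> y \<and> upar lam s \<le> prow lam y}"

lemma S_sub: "1 \<le> s \<Longrightarrow> s \<le> dpar lam \<Longrightarrow> S s \<subseteq> {1..length lam}"
proof
  fix y assume s: "1 \<le> s" "s \<le> dpar lam" and "y \<in> S s"
  then have "1 \<le> y" "upar lam s \<le> prow lam y" by (auto simp: S_def)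
  moreover have "0 < upar lam s" using u_pos s by blast
  ultimately show "y \<in> {1..length lam}" using prow_in[of y] by auto
qed

lemma N_card: "1 \<le> s \<Longrightarrow> s \<le> dpar lam \<Longrightarrow> vsum lam 1 s = card (S s)"
proof (induction s)
  case 0 then show ?case by simp
next
  case (Suc s)
  show ?case
  proof (cases "s = 0")
    case True
    have "S 1 = {y. 1 \<le> y \<and> y \<le> length lam \<and> prow lam y = upar lam 1}"
      using val_le S_sub[of 1] Suc.prems True by (auto simp: S_def intro: order.antisym)
    then show ?thesis using True by (simp add: vsum_def vpar_card)
  next
    case False
    then have s1: "1 \<le> s" "s \<le> dpar lam" using Suc.prems by auto
    have eq: "S (Suc s) = S s \<union> {y. 1 \<le> y \<and> y \<le> length lam \<and> prow lam y = upar lam (Suc s)}"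
    proof -
      have "y \<in> S s" if "y \<in> S (Suc s)" "prow lam y \<noteq> upar lam (Suc s)" for y
      proof (rule ccontr)
        assume "y \<notin> S s"
        then have "prow lam y \<le> upar lam (Suc s)" using val_below[of y s] s1 that by (auto simp: S_def)
        then show False using that by (auto simp: S_def)
      qed
      moreover have "S s \<subseteq> S (Suc s)" using u_suc_le[of s] s1 by (auto simp: S_def)
      ultimately show ?thesis using S_sub[of "Suc s"] Suc.prems by (auto simp: S_def)
    qed
    have disj: "S s \<inter> {y. 1 \<le> y \<and> y \<le> length lam \<and> prow lam y = upar lam (Suc s)} = {}"
      using u_gap[of s] s1 by (auto simp: S_def)
    have fin: "finite (S s)" using S_sub[of s] s1 finite_subset by blast
    have "vsum lam 1 (Suc s) = vsum lam 1 s + vpar lam (Suc s)"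
      by (simp add: vsum_def)
    also have "\<dots> = card (S (Suc s))"
      using Suc.IH[OF s1] eq disj fin by (simp add: vpar_card card_Un_disjoint)
    finally show ?thesis .
  qed
qed

lemma S_seg: "1 \<le> s \<Longrightarrow> s \<le> dpar lam \<Longrightarrow> S s = {1..vsum lam 1 s}"
proof -
  assume s: "1 \<le> s" "s \<le> dpar lam"
  have "S s = {1..card (S s)}"
  proof (rule init_seg[OF S_sub[OF s]])
    fix y y' assume "y \<in> S s" "1 \<le> y'" "y' \<le> y"
    then show "y' \<in> S s" using prow_dec[of y' y] by (auto simp: S_def)
  qed
  then show ?thesis using N_card[OF s] by simp
qed

lemma S_iff: "1 \<le> s \<Longrightarrow> s \<le> dpar lam \<Longrightarrow> 1 \<le> y \<Longrightarrow> (upar lam s \<le> prow lam y \<longleftrightarrow> y \<le> vsum lam 1 s)"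
  using S_seg[of s] by (auto simp: S_def set_eq_iff)

lemma N_le: "s \<le> dpar lam \<Longrightarrow> vsum lam 1 s \<le> length lam"
proof (cases "s = 0")
  case False
  assume "s \<le> dpar lam"
  then show ?thesis using S_seg[of s] S_sub[of s] False by auto
qed (simp add: vsum_def)

lemma N_step: "vsum lam 1 (Suc s) = vsum lam 1 s + vpar lam (Suc s)"
  by (simp add: vsum_def)

lemma N_d: "vsum lam 1 (dpar lam) = length lam"
proof (cases "dpar lam = 0")
  case True
  then have "lam = []" by (simp add: dpar_def)
  then show ?thesis using True by (simp add: vsum_def)
next
  case False
  have "{1..length lam} \<subseteq> S (dpar lam)"
  proof
    fix y assume y: "y \<in> {1..length lam}"
    then have "prow lam y \<in> set lam" by (auto simp: prow_def)
    then obtain k where "1 \<le> k" "k \<le> dpar lam" "prow lam y = upar lam k" using u_surj by blast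
    then show "y \<in> S (dpar lam)" using y u_anti[of k "dpar lam"] by (auto simp: S_def)
  qed
  then have "S (dpar lam) = {1..length lam}" using S_sub[of "dpar lam"] False by auto
  then show ?thesis using S_seg[of "dpar lam"] False by auto
qed


lemma u_after: "upar lam (Suc (dpar lam)) = 0"
  by (simp add: upar_def)

lemma N_pos: "1 \<le> r \<Longrightarrow> r \<le> dpar lam \<Longrightarrow> vsum lam 1 (r - 1) < vsum lam 1 r"
  using N_step[of "r - 1"] vpar_pos[of r] by simp

lemma prow_plus: "s \<le> dpar lam \<Longrightarrow> prow lam (Suc (vsum lam 1 s)) = upar lam (Suc s)"
proof -
  assume s: "s \<le> dpar lam"
  show ?thesis
  proof (cases "s = dpar lam")
    case True
    then show ?thesis using N_d by (simp add: prow_def upar_def)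
  next
    case False
    have lt: "vsum lam 1 s < vsum lam 1 (Suc s)" using N_pos[of "Suc s"] False s by simp
    then have ge: "upar lam (Suc s) \<le> prow lam (Suc (vsum lam 1 s))"
      using S_iff[of "Suc s" "Suc (vsum lam 1 s)"] False s by simp
    have le: "prow lam (Suc (vsum lam 1 s)) \<le> upar lam (Suc s)"
    proof (cases "s = 0")
      case True then show ?thesis using val_le by simp
    next
      case False
      then have "\<not> upar lam s \<le> prow lam (Suc (vsum lam 1 s))"
        using S_iff[of s "Suc (vsum lam 1 s)"] s by simp
      then show ?thesis using val_below[of "Suc (vsum lam 1 s)" s] False s by simp
    qed
    show ?thesis using ge le by simp
  qed
qed

lemma pconj_plus: "s \<le> dpar lam \<Longrightarrow> pconj lam (upar lam (Suc s) + 1) = vsum lam 1 s"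
proof -
  assume s: "s \<le> dpar lam"
  have "{y. 1 \<le> y \<and> upar lam (Suc s) + 1 \<le> prow lam y} = {1..vsum lam 1 s}"
  proof (cases "s = 0")
    case True
    then show ?thesis using val_le by (auto simp: vsum_def) (meson not_less_eq_eq)
  next
    case False
    have "upar lam (Suc s) + 1 \<le> prow lam y \<longleftrightarrow> upar lam s \<le> prow lam y" if "1 \<le> y" for y
      using u_gap[of s] val_below[of y s] that s False by force
    then show ?thesis using S_iff[of s] s False by auto
  qed
  then show ?thesis by (simp add: pconj_alt)
qed

lemma onecell_plus: "s \<le> dpar lam \<Longrightarrow> onecell (lam_plus lam s) lam (Suc (vsum lam 1 s))"
  unfolding onecell_def lam_plus_def
  using add_cell_prow[of "Suc (vsum lam 1 s)" lam] N_le[of s] prow_plus[of s] pconj_plus[of s]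
  by simp

lemma prow_minus: "1 \<le> r \<Longrightarrow> r \<le> dpar lam \<Longrightarrow> prow lam (vsum lam 1 r) = upar lam r"
proof -
  assume r: "1 \<le> r" "r \<le> dpar lam"
  have Y1: "1 \<le> vsum lam 1 r" using N_pos[OF r] by simp
  have ge: "upar lam r \<le> prow lam (vsum lam 1 r)" using S_iff[OF r Y1] by simp
  have le: "prow lam (vsum lam 1 r) \<le> upar lam r"
  proof (cases "r = 1")
    case True then show ?thesis using val_le[OF Y1] by simp
  next
    case False
    then have r1: "1 \<le> r - 1" "r - 1 \<le> dpar lam" using r by auto
    have "\<not> upar lam (r - 1) \<le> prow lam (vsum lam 1 r)"
      using S_iff[OF r1 Y1] N_pos[OF r] by simp
    then show ?thesis using val_below[OF Y1 r1] r1 by simp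
  qed
  show ?thesis using ge le by simp
qed

lemma minus_last: "1 \<le> r \<Longrightarrow> r \<le> dpar lam \<Longrightarrow> upar lam r = 1 \<Longrightarrow> vsum lam 1 r = length lam"
proof (rule ccontr)
  assume r: "1 \<le> r" "r \<le> dpar lam" and u1: "upar lam r = 1" and ne: "vsum lam 1 r \<noteq> length lam"
  let ?Y = "vsum lam 1 r"
  have Y1: "1 \<le> ?Y" using N_pos[OF r] by simp
  have lt: "Suc ?Y \<le> length lam" using ne N_le[OF r(2)] by simp
  then have "prow lam (Suc ?Y) \<in> set lam" by (simp add: prow_def)
  then have "0 < prow lam (Suc ?Y)" by (rule lam_pos)
  then have "upar lam r \<le> prow lam (Suc ?Y)" using u1 by simp
  then show False using S_iff[OF r, of "Suc ?Y"] by simp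
qed

lemma prow_lam_minus: "1 \<le> r \<Longrightarrow> r \<le> dpar lam \<Longrightarrow>
   prow (lam_minus lam r) = (prow lam)(vsum lam 1 r := upar lam r - 1)"
proof -
  assume r: "1 \<le> r" "r \<le> dpar lam"
  let ?Y = "vsum lam 1 r"
  have Y1: "1 \<le> ?Y" using N_pos[OF r] by simp
  have Yl: "?Y \<le> length lam" using N_le[OF r(2)] .
  have "lam ! (?Y - 1) = upar lam r" using prow_minus[OF r] Y1 Yl by (simp add: prow_def)
  then have "prow (rem_cell lam ?Y) = (prow lam)(?Y := prow lam ?Y - 1)"
    using rem_cell_prow[OF Y1 Yl] lam_pos minus_last[OF r] by auto
  then show ?thesis using r prow_minus[OF r] by (simp add: lam_minus_def)
qed

lemma onecell_minus: "1 \<le> r \<Longrightarrow> r \<le> dpar lam \<Longrightarrow> onecell lam (lam_minus lam r) (vsum lam 1 r)"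
proof -
  assume r: "1 \<le> r" "r \<le> dpar lam"
  let ?Y = "vsum lam 1 r" and ?mu = "lam_minus lam r"
  have Y1: "1 \<le> ?Y" using N_pos[OF r] by simp
  have up: "0 < upar lam r" using u_pos[OF r] .
  have pm: "prow ?mu = (prow lam)(?Y := upar lam r - 1)" by (rule prow_lam_minus[OF r])
  have 1: "prow lam = (prow ?mu)(?Y := prow ?mu ?Y + 1)"
    using pm up prow_minus[OF r] by (auto simp: fun_eq_iff)
  have "{y. 1 \<le> y \<and> upar lam r \<le> prow ?mu y} = {1..?Y - 1}"
    using S_iff[OF r] up Y1 by (auto simp: pm)
  then have 2: "pconj ?mu (prow ?mu ?Y + 1) = ?Y - 1"
    using pm up by (simp add: pconj_alt)
  show ?thesis unfolding onecell_def using Y1 1 2 by simp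
qed

lemma hsum_tel: "1 \<le> i \<Longrightarrow> i \<le> Suc j \<Longrightarrow> int (hsum lam i j) = int (upar lam i) - int (upar lam (Suc j))"
proof (induction j)
  case 0
  then have "i = 1" by simp
  then show ?case by (simp add: hsum_def)
next
  case (Suc j)
  show ?case
  proof (cases "i = Suc (Suc j)")
    case True then show ?thesis by (simp add: hsum_def)
  next
    case False
    then have "i \<le> Suc j" using Suc.prems by simp
    then have "hsum lam i (Suc j) = hsum lam i j + hpar lam (Suc j)"
      by (simp add: hsum_def)
    moreover have "int (hpar lam (Suc j)) = int (upar lam (Suc j)) - int (upar lam (Suc (Suc j)))"
      using u_suc_le[of "Suc j"] by (simp add: hpar_def of_nat_diff)
    ultimately show ?thesis using Suc.IH[OF Suc.prems(1) \<open>i \<le> Suc j\<close>] by simp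
  qed
qed

end

lemma vsum_split: "r \<le> s \<Longrightarrow> vsum lam 1 s = vsum lam 1 r + vsum lam (Suc r) s"
  unfolding vsum_def using sum.ub_add_nat[of 1 r "vpar lam" "s - r"] by simp

lemma inv_pow: "(1 / (q::real)) powi n = q powi (- n)"
  by (simp add: power_int_divide_distrib power_int_minus_divide)

definition gm :: "real \<Rightarrow> real \<Rightarrow> int \<Rightarrow> int \<Rightarrow> real" where
  "gm q t A B = (1 - q powi A * t powi B) * (1 - q powi (A + 1) * t powi (B - 1)) / ((1 - q) * (1 - t))"

lemma one_minus_inv:
  fixes q t :: real
  assumes "q \<noteq> 0" "t \<noteq> 0"
  shows "1 - (1/q) powi i * (1/t) powi j = - (q powi (-i) * t powi (-j)) * (1 - q powi i * t powi j)"
  using br_inv[OF assms, of i j] by (simp add: br_def)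

lemma rearr4: "((c1::real) * X) * (c2 * Y) / ((c3 * Z) * (c4 * W)) = (c1 * c2 / (c3 * c4)) * (X * Y / (Z * W))"
  by (simp add: divide_inverse mult_ac inverse_mult_distrib)

lemma gm_inv:
  assumes q0: "q \<noteq> 0" and t0: "t \<noteq> 0"
  shows "gm (1/q) (1/t) A B = q powi (- A - A) * t powi (2 - B - B) * gm q t A B"
proof -
  have a: "1 - 1/q = - (q powi (-1)) * (1 - q)" using q0 by (simp add: field_simps power_int_minus)
  have b: "1 - 1/t = - (t powi (-1)) * (1 - t)" using t0 by (simp add: field_simps power_int_minus)
  have "gm (1/q) (1/t) A B =
     (- (q powi (-A) * t powi (-B)) * (1 - q powi A * t powi B)) *
     (- (q powi (-(A+1)) * t powi (-(B-1))) * (1 - q powi (A+1) * t powi (B-1))) /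
     ((- (q powi (-1)) * (1 - q)) * (- (t powi (-1)) * (1 - t)))"
    unfolding gm_def one_minus_inv[OF q0 t0] a b ..
  also have "\<dots> = ((- (q powi (-A) * t powi (-B))) * (- (q powi (-(A+1)) * t powi (-(B-1)))) /
       ((- (q powi (-1))) * (- (t powi (-1))))) * gm q t A B"
    unfolding rearr4 gm_def ..
  also have "(- (q powi (-A) * t powi (-B))) * (- (q powi (-(A+1)) * t powi (-(B-1)))) /
       ((- (q powi (-1))) * (- (t powi (-1)))) = q powi (- A - A) * t powi (2 - B - B)"
    using q0 t0 by (simp add: power_int_add power_int_diff power_int_minus field_simps power_int_mult power2_eq_square)
  finally show ?thesis .
qed

lemma fin_rearr:
  fixes q t a b g :: real and X Y X1 Y1 :: nat
  assumes q0: "q \<noteq> 0" and t0: "t \<noteq> 0"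
  shows "(1/t) powi (B - 1) * (q ^ X * t ^ Y * a) * (1 / (q ^ X1 * t ^ Y1 * b)) / (q powi (- A - A) * t powi (2 - B - B) * g)
   = ((1/t) powi (B - 1) * q powi int X * t powi int Y / (q powi int X1 * t powi int Y1) / (q powi (- A - A) * t powi (2 - B - B))) * a * (1/b) / g"
  by (simp add: divide_inverse mult_ac inverse_mult_distrib)

lemma mono1:
  fixes q t :: real and x y x1 y1 A B H V :: int
  assumes q0: "q \<noteq> 0" and t0: "t \<noteq> 0"
    and e: "x1 = x + H - 1" "y = y1 + 1 + V" "A = H - 1" "B = V + 1"
  shows "(1/t) powi (B - 1) * q powi x * t powi y / (q powi x1 * t powi y1) / (q powi (- A - A) * t powi (2 - B - B))
     = q powi (-1 + H) * t powi (1 + 2 * V)"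
  unfolding e using q0 t0 by (simp add: inv_pow power_int_add power_int_diff power_int_minus field_simps power_int_mult power2_eq_square)

lemma mono2:
  fixes q t :: real and x y x1 y1 A B H V :: int
  assumes q0: "q \<noteq> 0" and t0: "t \<noteq> 0"
    and e: "x = x1 + 1 + H" "y1 = y + V - 1" "A = - H - 1" "B = 1 - V"
  shows "(1/t) powi (B - 1) * q powi x * t powi y / (q powi x1 * t powi y1) / (q powi (- A - A) * t powi (2 - B - B))
     = q powi H * (q powi (- H - 1) * t powi (1 - V) * (q powi (- H) * t powi (- V)))"
  unfolding e using q0 t0 by (simp add: inv_pow power_int_add power_int_diff power_int_minus field_simps power_int_mult power2_eq_square)

lemma one_minus_neg:
  fixes q t :: real
  assumes "q \<noteq> 0" "t \<noteq> 0"
  shows "1 - q powi (-i) * t powi (-j) = - (q powi (-i) * t powi (-j)) * (1 - q powi i * t powi j)"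
  using assms by (simp add: power_int_minus field_simps)

lemma gm_case1: "gm q t (H - 1) (V + 1) = br q t H V * br q t (H - 1) (V + 1) / (br q t 0 1 * br q t 1 0)"
  by (simp add: gm_def br_def mult_ac)

lemma gm_case2:
  fixes q t :: real
  assumes q0: "q \<noteq> 0" and t0: "t \<noteq> 0"
  shows "gm q t (- H - 1) (1 - V) = (q powi (- H - 1) * t powi (1 - V) * (q powi (- H) * t powi (- V)))
      * (br q t H V * br q t (H + 1) (V - 1) / (br q t 0 1 * br q t 1 0))"
proof -
  have e1: "1 - q powi (- H - 1) * t powi (1 - V) = - (q powi (- H - 1) * t powi (1 - V)) * br q t (H + 1) (V - 1)"
    using one_minus_neg[OF q0 t0, of "H + 1" "V - 1"] by (simp add: br_def)
  have e2: "1 - q powi (- H - 1 + 1) * t powi (1 - V - 1) = - (q powi (- H) * t powi (- V)) * br q t H V"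
    using one_minus_neg[OF q0 t0, of H V] by (simp add: br_def)
  show ?thesis unfolding gm_def e1 e2
    by (simp add: br_def divide_inverse mult_ac inverse_mult_distrib)
qed

lemma mono_div:
  fixes m c z :: real
  assumes "m = w * c" "c \<noteq> 0"
  shows "m * z / (c * g) = w * z / g"
  using assms by (simp add: divide_inverse mult_ac inverse_mult_distrib)

theorem lemma5p1:
  fixes lam :: "nat list" and q t :: real and r s :: nat
  assumes "is_partition lam"
    and "generic_qt q t"
    and "s \<le> dpar lam"
    and "r \<le> dpar lam"
  shows "pcol q t lam r s =
           (if r = 0 then q ^ hsum lam (s + 1) (dpar lam) * alpha q t (lam_plus lam s) lam
            else taucol q t lam r s * alpha q t (lam_plus lam s) lam * beta q t lam (lam_minus lam r)
                   / gammap q t lam r s)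
       \<and> pbarcol q t lam r s =
           (if r = 0 then q ^ hsum lam (s + 1) (dpar lam) * alphabar q t (lam_plus lam s) lam
            else taucol q t lam r s * alphabar q t (lam_plus lam s) lam * betabar q t lam (lam_minus lam r)
                   / gammap q t lam r s)"
proof -
  have part: "is_partition lam" by (rule assms(1))
  have q0: "q \<noteq> 0" and t0: "t \<noteq> 0" using assms(2) by (auto simp: generic_qt_def)
  define Y where "Y = vsum lam 1 s"
  define X where "X = upar lam (Suc s)"
  define nu where "nu = lam_plus lam s"
  interpret P: onecell nu lam "Suc Y" unfolding nu_def Y_def by (rule onecell_plus[OF part assms(3)])
  have pX: "prow lam (Suc Y) = X" unfolding X_def Y_def by (rule prow_plus[OF part assms(3)])
  have aP: "alpha (1/q) (1/t) nu lam = q ^ X * t ^ Y * alpha q t nu lam"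
    using P.alpha_inv[OF q0 t0] pX by simp
  have abP: "alphabar (1/q) (1/t) nu lam = q ^ X * t ^ Y * alphabar q t nu lam"
    using P.alphabar_inv[OF q0 t0] pX by simp
  have nP: "nfun nu - nfun lam = int Y" using P.nfun_diff by simp
  have n'P: "nfun' nu - nfun' lam = int X" using P.nfun'_diff pX by simp
  have hX: "hsum lam (s + 1) (dpar lam) = X"
    using hsum_tel[OF part, of "Suc s" "dpar lam"] assms(3) u_after[OF part] by (simp add: X_def)
  show ?thesis
  proof (cases "r = 0")
    case True
    have ty: "(1/t) powi int Y * t ^ Y = 1"
    proof -
      have "(1/t) powi int Y * t ^ Y = ((1/t) * t) ^ Y" by (simp only: power_int_of_nat power_mult_distrib)
      then show ?thesis using t0 by simp
    qed
    have c0: "(1/t) powi int Y * (q ^ X * t ^ Y * z) = q ^ X * z" for z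
    proof -
      have "(1/t) powi int Y * (q ^ X * t ^ Y * z) = q ^ X * z * ((1/t) powi int Y * t ^ Y)"
        by (simp only: mult_ac)
      then show ?thesis using ty by simp
    qed
    have "pcol q t lam r s = q ^ X * alpha q t nu lam"
      unfolding pcol_def ppar_def P0_def using True aP nP c0 by (simp add: nu_def)
    moreover have "pbarcol q t lam r s = q ^ X * alphabar q t nu lam"
      unfolding pbarcol_def pbarpar_def P0bar_def using True abP nP c0 by (simp add: nu_def)
    ultimately show ?thesis using True hX by (simp add: nu_def)
  next
    case False
    then have r1: "1 \<le> r" by simp
    define Y' where "Y' = vsum lam 1 r"
    define X' where "X' = upar lam r"
    define mu where "mu = lam_minus lam r"
    interpret M: onecell lam mu Y' unfolding mu_def Y'_def by (rule onecell_minus[OF part r1 assms(4)])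
    have pm: "prow mu Y' = X' - 1"
      using prow_lam_minus[OF part r1 assms(4)] by (simp add: mu_def Y'_def X'_def)
    have X'1: "1 \<le> X'" using u_pos[OF part r1 assms(4)] by (simp add: X'_def)
    have Y'1: "1 \<le> Y'" using N_pos[OF part r1 assms(4)] by (simp add: Y'_def)
    have aM: "alpha (1/q) (1/t) lam mu = q ^ (X' - 1) * t ^ (Y' - 1) * alpha q t lam mu"
      using M.alpha_inv[OF q0 t0] pm by simp
    have abM: "alphabar (1/q) (1/t) lam mu = q ^ (X' - 1) * t ^ (Y' - 1) * alphabar q t lam mu"
      using M.alphabar_inv[OF q0 t0] pm by simp
    have nM: "nfun lam - nfun mu = int (Y' - 1)" using M.nfun_diff by simp
    have n'M: "nfun' lam - nfun' mu = int (X' - 1)" using M.nfun'_diff pm by simp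
    define A where "A = int (X' - 1) - int X"
    define B where "B = int Y - int (Y' - 1)"
    have gA: "gA nu lam mu = A" unfolding gA_def A_def using n'P n'M by simp
    have gB: "gB nu lam mu = B" unfolding gB_def B_def using nP nM by simp
    have gam: "gamma (1/q) (1/t) nu lam mu = q powi (- A - A) * t powi (2 - B - B) * gm q t A B"
    proof -
      have "gamma (1/q) (1/t) nu lam mu = gm (1/q) (1/t) A B"
        unfolding gamma_def gm_def gA gB ..
      then show ?thesis using gm_inv[OF q0 t0] by simp
    qed
    define mono where "mono = (1/t) powi (B - 1) * q powi int X * t powi int Y
        / (q powi int (X' - 1) * t powi int (Y' - 1)) / (q powi (- A - A) * t powi (2 - B - B))"
    have pc: "pcol q t lam r s = mono * alpha q t nu lam * (1 / alpha q t lam mu) / gm q t A B"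
    proof -
      have "pcol q t lam r s = (1/t) powi (B - 1) * alpha (1/q) (1/t) nu lam * (1 / alpha (1/q) (1/t) lam mu)
          / gamma (1/q) (1/t) nu lam mu"
        unfolding pcol_def ppar_def P1_def beta_def if_not_P[OF False] nu_def[symmetric] mu_def[symmetric] gB ..
      also have "\<dots> = (1/t) powi (B - 1) * (q ^ X * t ^ Y * alpha q t nu lam) * (1 / (q ^ (X' - 1) * t ^ (Y' - 1) * alpha q t lam mu))
          / (q powi (- A - A) * t powi (2 - B - B) * gm q t A B)"
        unfolding aP aM gam ..
      also have "\<dots> = mono * alpha q t nu lam * (1 / alpha q t lam mu) / gm q t A B"
        unfolding fin_rearr[OF q0 t0] mono_def ..
      finally show ?thesis .
    qed
    have pbc: "pbarcol q t lam r s = mono * alphabar q t nu lam * (1 / alphabar q t lam mu) / gm q t A B"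
    proof -
      have "pbarcol q t lam r s = (1/t) powi (B - 1) * alphabar (1/q) (1/t) nu lam * (1 / alphabar (1/q) (1/t) lam mu)
          / gamma (1/q) (1/t) nu lam mu"
        unfolding pbarcol_def pbarpar_def P1bar_def betabar_def if_not_P[OF False] nu_def[symmetric] mu_def[symmetric] gB ..
      also have "\<dots> = (1/t) powi (B - 1) * (q ^ X * t ^ Y * alphabar q t nu lam) * (1 / (q ^ (X' - 1) * t ^ (Y' - 1) * alphabar q t lam mu))
          / (q powi (- A - A) * t powi (2 - B - B) * gm q t A B)"
        unfolding abP abM gam ..
      also have "\<dots> = mono * alphabar q t nu lam * (1 / alphabar q t lam mu) / gm q t A B"
        unfolding fin_rearr[OF q0 t0] mono_def ..
      finally show ?thesis .
    qed
    show ?thesis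
    proof (cases "r \<le> s")
      case True
      define H where "H = int (hsum lam r s)"
      define V where "V = int (vsum lam (Suc r) s)"
      have hH: "H = int X' - int X"
        using hsum_tel[OF part r1, of s] True by (simp add: H_def X'_def X_def)
      have hV: "int Y = int Y' + V"
        using vsum_split[OF True, of lam] by (simp add: V_def Y_def Y'_def)
      have m: "mono = q powi (-1 + H) * t powi (1 + 2 * V)"
        unfolding mono_def
        by (rule mono1[OF q0 t0]) (use hH hV X'1 Y'1 in \<open>auto simp: A_def B_def\<close>)
      have g: "gm q t A B = gammap q t lam r s"
      proof -
        have "A = H - 1" "B = V + 1" using hH hV X'1 Y'1 by (auto simp: A_def B_def)
        then show ?thesis using True r1 gm_case1[of q t H V] by (simp add: gammap_def H_def V_def)
      qed
      have tau: "taucol q t lam r s = q powi (-1 + H) * t powi (1 + 2 * V)"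
        using True r1 by (simp add: taucol_def H_def V_def)
      show ?thesis using False pc pbc m g tau by (simp add: beta_def betabar_def nu_def mu_def)
    next
      case False2: False
      define H where "H = int (hsum lam (s + 1) (r - 1))"
      define V where "V = int (vsum lam (s + 1) r)"
      have hH: "H = int X - int X'"
        using hsum_tel[OF part, of "Suc s" "r - 1"] False2 by (simp add: H_def X'_def X_def)
      have hV: "int Y' = int Y + V"
        using vsum_split[of s r lam] False2 by (simp add: V_def Y_def Y'_def)
      define c where "c = q powi (- H - 1) * t powi (1 - V) * (q powi (- H) * t powi (- V))"
      have c0: "c \<noteq> 0" using q0 t0 by (simp add: c_def)
      have m: "mono = q powi H * c"
        unfolding mono_def c_def
        by (rule mono2[OF q0 t0]) (use hH hV X'1 Y'1 in \<open>auto simp: A_def B_def\<close>)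
      have g: "gm q t A B = c * gammap q t lam r s"
      proof -
        have "A = - H - 1" "B = 1 - V" using hH hV X'1 Y'1 by (auto simp: A_def B_def)
        then show ?thesis using False2 gm_case2[OF q0 t0, of H V] by (simp add: gammap_def H_def V_def c_def)
      qed
      have tau: "taucol q t lam r s = q powi H"
        using False2 by (simp add: taucol_def H_def)
      have e1: "pcol q t lam r s = q powi H * (alpha q t nu lam * (1 / alpha q t lam mu)) / gammap q t lam r s"
        using pc m g mono_div[of mono "q powi H" c] c0 by (simp add: mult.assoc)
      have e2: "pbarcol q t lam r s = q powi H * (alphabar q t nu lam * (1 / alphabar q t lam mu)) / gammap q t lam r s"
        using pbc m g mono_div[of mono "q powi H" c] c0 by (simp add: mult.assoc)
      show ?thesis using False e1 e2 tau by (simp add: beta_def betabar_def nu_def mu_def mult.assoc)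
    qed
  qed
qed

end
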